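(* Let $(X,G)$ be an abstract real spectrum. For $a,b\in G$ define $a+b=D^t(a,b)$, $-a=(-1)\cdot a$, and let $\cdot$ be pointwise multiplication, $0$ and $1$ the constant functions. Then $(G,+,\cdot,-,0,1)$ is a real reduced multiring.
   Context: For a set $X$, $\{-1,0,1\}^X$ is a monoid under pointwise multiplication. An abstract real spectrum (ARS) is a pair $(X,G)$ such that: (AX1) $X$ is a non-empty set, $G$ is a submonoid of $\{-1,0,1\}^X$ containing the constant functions $-1,0,1$, and $G$ separates points of $X$. For $a,b\in G$, $D(a,b)$ is the set of $c\in G$ such that for all $x\in X$: $a(x)c(x)>0$ or $b(x)c(x)>0$ or $c(x)=0$; and $D^t(a,b)$ is the set of $c\in G$ such that for all $x\in X$: $a(x)c(x)>0$ or $b(x)c(x)>0$ or ($c(x)=0$ and $b(x)=-a(x)$). (AX2) If $P$ is a submonoid of $G$ with $P\cup -P=G$, $-1\notin P$, $a,b\in P\Rightarrow D(a,b)\subseteq P$, and $ab\in P\cap -P\Rightarrow a\in P\cap-P$ or $b\in P\cap -P$, then there is $x\in X$ with $P=\{a\in G:a(x)\ge 0\}$. (AX3) For all $a,b,c\in G$: if $p\in D^t(a,q)$ for some $q\in D^t(b,c)$, then $p\in D^t(r,c)$ for some $r\in D^t(a,b)$. A multiring is a tuple $(R,+,\cdot,-,0,1)$ with $+:R\times R\to\mathcal P(R)\setminus\{\emptyset\}$ satisfying: $z\in x+y\Rightarrow x\in z+(-y)$ and $y\in(-x)+z$; $y\in0+x\iff y=x$; $+$ associative (with $Z+w=\bigcup_{z\in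 Z}(z+w)$) and commutative; $(R,\cdot,1)$ a commutative monoid; $a0=0$; $c\in a+b\Rightarrow cd\in ad+bd$. A multiring $A$ is real reduced if $1\neq 0$ and for all $a,b,c,d\in A$: $a^3=a$; $c\in a+ab^2\Rightarrow c=a$; $c,d\in a^2+b^2\Rightarrow c=d$. *)

theory Defs
  imports Main
begin

(* X is represented by the type 'x (X = UNIV, non-empty automatically);
   elements of {-1,0,1}^X are functions 'x => int with values in {-1,0,1}. *)

definition sgnfuns :: "('x \<Rightarrow> int) set" where
  "sgnfuns = {f. \<forall>x. f x \<in> {-1, 0, 1}}"

definition pmul :: "('x \<Rightarrow> int) \<Rightarrow> ('x \<Rightarrow> int) \<Rightarrow> ('x \<Rightarrow> int)" where
  "pmul a b = (\<lambda>x. a x * b x)"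

definition cst :: "int \<Rightarrow> ('x \<Rightarrow> int)" where
  "cst k = (\<lambda>_. k)"

definition D :: "('x \<Rightarrow> int) set \<Rightarrow> ('x \<Rightarrow> int) \<Rightarrow> ('x \<Rightarrow> int) \<Rightarrow> ('x \<Rightarrow> int) set" where
  "D G a b = {c \<in> G. \<forall>x. a x * c x > 0 \<or> b x * c x > 0 \<or> c x = 0}"

definition Dt :: "('x \<Rightarrow> int) set \<Rightarrow> ('x \<Rightarrow> int) \<Rightarrow> ('x \<Rightarrow> int) \<Rightarrow> ('x \<Rightarrow> int) set" where
  "Dt G a b = {c \<in> G. \<forall>x. a x * c x > 0 \<or> b x * c x > 0 \<or> (c x = 0 \<and> b x = - a x)}"

definition negset :: "('x \<Rightarrow> int) set \<Rightarrow> ('x \<Rightarrow> int) set" where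
  "negset P = (\<lambda>a. pmul (cst (-1)) a) ` P"

definition ARS :: "('x \<Rightarrow> int) set \<Rightarrow> bool" where
  "ARS G \<longleftrightarrow>
     \<comment> \<open>AX1\<close>
     G \<subseteq> sgnfuns \<and>
     (\<forall>a\<in>G. \<forall>b\<in>G. pmul a b \<in> G) \<and>
     cst (-1) \<in> G \<and> cst 0 \<in> G \<and> cst 1 \<in> G \<and>
     (\<forall>x y. x \<noteq> y \<longrightarrow> (\<exists>a\<in>G. a x \<noteq> a y)) \<and>
     \<comment> \<open>AX2\<close>
     (\<forall>P. (P \<subseteq> G \<and> cst 1 \<in> P \<and> (\<forall>a\<in>P. \<forall>b\<in>P. pmul a b \<in> P)
           \<and> P \<union> negset P = G \<and> cst (-1) \<notin> P
           \<and> (\<forall>a\<in>P. \<forall>b\<in>P. D G a b \<subseteq> P)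
           \<and> (\<forall>a\<in>G. \<forall>b\<in>G. pmul a b \<in> P \<inter> negset P \<longrightarrow>
                 a \<in> P \<inter> negset P \<or> b \<in> P \<inter> negset P))
          \<longrightarrow> (\<exists>x. P = {a \<in> G. a x \<ge> 0})) \<and>
     \<comment> \<open>AX3\<close>
     (\<forall>a\<in>G. \<forall>b\<in>G. \<forall>c\<in>G. \<forall>p q.
        q \<in> Dt G b c \<and> p \<in> Dt G a q \<longrightarrow> (\<exists>r \<in> Dt G a b. p \<in> Dt G r c))"

definition setadd :: "('a \<Rightarrow> 'a \<Rightarrow> 'a set) \<Rightarrow> 'a set \<Rightarrow> 'a \<Rightarrow> 'a set" where
  "setadd add Z w = (\<Union>z\<in>Z. add z w)"

definition multiring ::
  "'a set \<Rightarrow> ('a \<Rightarrow> 'a \<Rightarrow> 'a set) \<Rightarrow> ('a \<Rightarrow> 'a \<Rightarrow> 'a) \<Rightarrow> ('a \<Rightarrow> 'a) \<Rightarrow> 'a \<Rightarrow> 'a \<Rightarrow> bool" where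
  "multiring R add mul neg zero one \<longleftrightarrow>
     zero \<in> R \<and> one \<in> R \<and>
     (\<forall>x\<in>R. neg x \<in> R) \<and>
     (\<forall>x\<in>R. \<forall>y\<in>R. mul x y \<in> R) \<and>
     (\<forall>x\<in>R. \<forall>y\<in>R. add x y \<subseteq> R \<and> add x y \<noteq> {}) \<and>
     (\<forall>x\<in>R. \<forall>y\<in>R. \<forall>z\<in>R. z \<in> add x y \<longrightarrow> x \<in> add z (neg y) \<and> y \<in> add (neg x) z) \<and>
     (\<forall>x\<in>R. \<forall>y\<in>R. y \<in> add zero x \<longleftrightarrow> y = x) \<and>
     (\<forall>x\<in>R. \<forall>y\<in>R. \<forall>w\<in>R. setadd add (add x y) w = (\<Union>v\<in>add y w. add x v)) \<and>
     (\<forall>x\<in>R. \<forall>y\<in>R. add x y = add y x) \<and>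
     (\<forall>x\<in>R. \<forall>y\<in>R. \<forall>z\<in>R. mul (mul x y) z = mul x (mul y z)) \<and>
     (\<forall>x\<in>R. \<forall>y\<in>R. mul x y = mul y x) \<and>
     (\<forall>x\<in>R. mul x one = x) \<and>
     (\<forall>a\<in>R. mul a zero = zero) \<and>
     (\<forall>a\<in>R. \<forall>b\<in>R. \<forall>c\<in>R. \<forall>d\<in>R. c \<in> add a b \<longrightarrow> mul c d \<in> add (mul a d) (mul b d))"

definition real_reduced_multiring ::
  "'a set \<Rightarrow> ('a \<Rightarrow> 'a \<Rightarrow> 'a set) \<Rightarrow> ('a \<Rightarrow> 'a \<Rightarrow> 'a) \<Rightarrow> ('a \<Rightarrow> 'a) \<Rightarrow> 'a \<Rightarrow> 'a \<Rightarrow> bool" where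
  "real_reduced_multiring R add mul neg zero one \<longleftrightarrow>
     multiring R add mul neg zero one \<and>
     one \<noteq> zero \<and>
     (\<forall>a\<in>R. mul a (mul a a) = a) \<and>
     (\<forall>a\<in>R. \<forall>b\<in>R. \<forall>c\<in>R. c \<in> add a (mul a (mul b b)) \<longrightarrow> c = a) \<and>
     (\<forall>a\<in>R. \<forall>b\<in>R. \<forall>c\<in>R. \<forall>d\<in>R.
        c \<in> add (mul a a) (mul b b) \<and> d \<in> add (mul a a) (mul b b) \<longrightarrow> c = d)"

end

theory Submission
  imports Defs
begin

lemma p_rev: "x\<in>{-1,0,1::int} \<Longrightarrow> y\<in>{-1,0,1} \<Longrightarrow> z\<in>{-1,0,1} \<Longrightarrow> (x*z>0 \<or> y*z>0 \<or> (z=0 \<and> y=-x)) \<Longrightarrow> (z*x>0 \<or> (-1*y)*x>0 \<or> (x=0 \<and> -1*y = -z))" by auto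
lemma p_m3: "a\<in>{-1,0,1::int} \<Longrightarrow> b\<in>{-1,0,1} \<Longrightarrow> c\<in>{-1,0,1} \<Longrightarrow> d\<in>{-1,0,1} \<Longrightarrow> (a*c>0 \<or> b*c>0 \<or> (c=0 \<and> b=-a)) \<Longrightarrow> ((a*d)*(c*d)>0 \<or> (b*d)*(c*d)>0 \<or> (c*d=0 \<and> b*d=-(a*d)))" by auto
lemma p_r2: "a\<in>{-1,0,1::int} \<Longrightarrow> b\<in>{-1,0,1} \<Longrightarrow> c\<in>{-1,0,1} \<Longrightarrow> (a*c>0 \<or> (a*(b*b))*c>0 \<or> (c=0 \<and> a*(b*b)=-a)) \<Longrightarrow> c = a" by auto
lemma p_r3: "a\<in>{-1,0,1::int} \<Longrightarrow> b\<in>{-1,0,1} \<Longrightarrow> c\<in>{-1,0,1} \<Longrightarrow> d\<in>{-1,0,1} \<Longrightarrow> ((a*a)*c>0 \<or> (b*b)*c>0 \<or> (c=0 \<and> b*b=-(a*a))) \<Longrightarrow> ((a*a)*d>0 \<or> (b*b)*d>0 \<or> (d=0 \<and> b*b=-(a*a))) \<Longrightarrow> c = d" by auto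
lemma p_m2: "x\<in>{-1,0,1::int} \<Longrightarrow> y\<in>{-1,0,1} \<Longrightarrow> (0*y>0 \<or> x*y>0 \<or> (y=0 \<and> x=-0)) \<longleftrightarrow> y = x" by auto
lemma p_sq: "x\<in>{-1,0,1::int} \<Longrightarrow> x*x>0 \<or> x = 0" by auto
lemma p_cube: "x\<in>{-1,0,1::int} \<Longrightarrow> x*(x*x) = x" by auto
lemma ARS_parts:
  assumes "ARS G"
  shows "G \<subseteq> sgnfuns" "\<forall>a\<in>G. \<forall>b\<in>G. pmul a b \<in> G"
    "cst (-1) \<in> G" "cst 0 \<in> G" "cst 1 \<in> G"
    "\<forall>a\<in>G. \<forall>b\<in>G. \<forall>c\<in>G. \<forall>p q.
        q \<in> Dt G b c \<and> p \<in> Dt G a q \<longrightarrow> (\<exists>r \<in> Dt G a b. p \<in> Dt G r c)"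
  using assms unfolding ARS_def apply -
  apply (elim conjE; assumption)+
  done

lemma val: "ARS G \<Longrightarrow> f \<in> G \<Longrightarrow> f x \<in> {-1,0,1}"
  using ARS_parts(1) unfolding sgnfuns_def by blast

lemma Dt_G: "c \<in> Dt G a b \<Longrightarrow> c \<in> G" by (simp add: Dt_def)

lemma Dt_comm: "Dt G a b = Dt G b a"
  unfolding Dt_def by auto

lemma pmul_G: "ARS G \<Longrightarrow> a \<in> G \<Longrightarrow> b \<in> G \<Longrightarrow> pmul a b \<in> G"
  using ARS_parts(2) by blast

lemma cst_G: "ARS G \<Longrightarrow> cst (-1) \<in> G \<and> cst 0 \<in> G \<and> cst 1 \<in> G"
  using ARS_parts(3,4,5) by blast

lemma neg_G: "ARS G \<Longrightarrow> a \<in> G \<Longrightarrow> pmul (cst (-1)) a \<in> G"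
  using pmul_G cst_G by blast

lemma ax3: "ARS G \<Longrightarrow> a \<in> G \<Longrightarrow> b \<in> G \<Longrightarrow> c \<in> G \<Longrightarrow> q \<in> Dt G b c \<Longrightarrow> p \<in> Dt G a q
  \<Longrightarrow> \<exists>r \<in> Dt G a b. p \<in> Dt G r c"
  using ARS_parts(6) by blast

lemma nonempty: assumes A: "ARS G" and a: "a \<in> G" and b: "b \<in> G" shows "Dt G a b \<noteq> {}"
proof -
  have nb: "pmul (cst (-1)) b \<in> G" using neg_G A b by blast
  have q: "cst 0 \<in> Dt G b (pmul (cst (-1)) b)" using cst_G[OF A]
    by (simp add: Dt_def pmul_def cst_def)
  have p: "a \<in> Dt G a (cst 0)" using a
  proof -
    have "\<forall>x. a x * a x > 0 \<or> (a x = 0)" proof fix x show "a x * a x > 0 \<or> a x = 0" using p_sq[OF val[OF A a, of x]] . qed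
    then show ?thesis using a by (auto simp: Dt_def cst_def)
  qed
  obtain r where "r \<in> Dt G a b" using ax3[OF A a b nb q p] by (elim bexE)
  then show ?thesis by blast
qed

lemma rev1: "ARS G \<Longrightarrow> x \<in> G \<Longrightarrow> y \<in> G \<Longrightarrow> z \<in> Dt G x y \<Longrightarrow> x \<in> Dt G z (pmul (cst (-1)) y)"
proof -
  assume A: "ARS G" and x: "x \<in> G" and y: "y \<in> G" and z: "z \<in> Dt G x y"
  have zG: "z \<in> G" using z by (simp add: Dt_def)
  show ?thesis unfolding Dt_def
  proof (intro CollectI conjI allI x)
    fix p
    have h: "x p * z p > 0 \<or> y p * z p > 0 \<or> (z p = 0 \<and> y p = - x p)" using z by (simp add: Dt_def)
    show "z p * x p > 0 \<or> pmul (cst (-1)) y p * x p > 0 \<or> (x p = 0 \<and> pmul (cst (-1)) y p = - z p)"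
      using p_rev[OF val[OF A x, of p] val[OF A y, of p] val[OF A zG, of p] h]
      unfolding pmul_def cst_def by blast
  qed
qed

lemma assoc1: assumes A: "ARS G" and x: "x \<in> G" and y: "y \<in> G" and w: "w \<in> G"
  shows "setadd (Dt G) (Dt G x y) w = (\<Union>v\<in>Dt G y w. Dt G x v)"
proof
  show "setadd (Dt G) (Dt G x y) w \<subseteq> (\<Union>v\<in>Dt G y w. Dt G x v)"
  proof
    fix p assume "p \<in> setadd (Dt G) (Dt G x y) w"
    then obtain q where q: "q \<in> Dt G x y" and p: "p \<in> Dt G q w" by (auto simp: setadd_def)
    have q': "q \<in> Dt G y x" using q Dt_comm by blast
    have p': "p \<in> Dt G w q" using p Dt_comm by blast
    obtain r where r: "r \<in> Dt G w y" "p \<in> Dt G r x" using ax3[OF A w y x q' p'] by blast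
    show "p \<in> (\<Union>v\<in>Dt G y w. Dt G x v)" using r Dt_comm by blast
  qed
next
  show "(\<Union>v\<in>Dt G y w. Dt G x v) \<subseteq> setadd (Dt G) (Dt G x y) w"
  proof
    fix p assume "p \<in> (\<Union>v\<in>Dt G y w. Dt G x v)"
    then obtain q where q: "q \<in> Dt G y w" and p: "p \<in> Dt G x q" by auto
    obtain r where r: "r \<in> Dt G x y" "p \<in> Dt G r w" using ax3[OF A x y w q p] by blast
    show "p \<in> setadd (Dt G) (Dt G x y) w" using r by (auto simp: setadd_def)
  qed
qed

theorem theorem4p3:
  fixes G :: "('x \<Rightarrow> int) set"
  assumes "ARS G"
  shows "real_reduced_multiring G (Dt G) pmul (\<lambda>a. pmul (cst (-1)) a) (cst 0) (cst 1)"
proof -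
  note A = assms
  note V = val[OF A]
  have m1: "\<forall>x\<in>G. \<forall>y\<in>G. \<forall>z\<in>G. z \<in> Dt G x y \<longrightarrow> x \<in> Dt G z (pmul (cst (-1)) y) \<and> y \<in> Dt G (pmul (cst (-1)) x) z"
  proof (intro ballI impI conjI)
    fix x y z assume x: "x \<in> G" and y: "y \<in> G" and z: "z \<in> G" and h: "z \<in> Dt G x y"
    show "x \<in> Dt G z (pmul (cst (-1)) y)" by (rule rev1[OF A x y h])
    have "z \<in> Dt G y x" using h Dt_comm by blast
    then have "y \<in> Dt G z (pmul (cst (-1)) x)" by (rule rev1[OF A y x])
    then show "y \<in> Dt G (pmul (cst (-1)) x) z" using Dt_comm by blast
  qed
  have m2: "\<forall>x\<in>G. \<forall>y\<in>G. y \<in> Dt G (cst 0) x \<longleftrightarrow> y = x"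
  proof (intro ballI iffI)
    fix x y assume x: "x \<in> G" and y: "y \<in> G" and h: "y \<in> Dt G (cst 0) x"
    show "y = x"
    proof
      fix p have "0*y p>0 \<or> x p*y p>0 \<or> (y p=0 \<and> x p=-0)" using h by (simp add: Dt_def cst_def)
      then show "y p = x p" using p_m2[OF V[OF x, of p] V[OF y, of p]] by blast
    qed
  next
    fix x y :: "'x \<Rightarrow> int" assume x: "x \<in> G" and "y = x"
    have "\<forall>p. x p * x p > 0 \<or> x p = 0" using p_sq[OF V[OF x]] by blast
    then show "y \<in> Dt G (cst 0) x" using x \<open>y = x\<close>
      by (simp add: Dt_def cst_def)
  qed
  have m3: "\<forall>a\<in>G. \<forall>b\<in>G. \<forall>c\<in>G. \<forall>d\<in>G. c \<in> Dt G a b \<longrightarrow> pmul c d \<in> Dt G (pmul a d) (pmul b d)"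
  proof (intro ballI impI)
    fix a b c d assume a: "a \<in> G" and b: "b \<in> G" and c: "c \<in> G" and d: "d \<in> G" and h: "c \<in> Dt G a b"
    show "pmul c d \<in> Dt G (pmul a d) (pmul b d)" unfolding Dt_def
    proof (intro CollectI conjI allI pmul_G[OF A c d])
      fix p
      have "a p * c p > 0 \<or> b p * c p > 0 \<or> (c p = 0 \<and> b p = - a p)" using h by (simp add: Dt_def)
      then show "0 < pmul a d p * pmul c d p \<or> 0 < pmul b d p * pmul c d p \<or> pmul c d p = 0 \<and> pmul b d p = - pmul a d p"
        using p_m3[OF V[OF a, of p] V[OF b, of p] V[OF c, of p] V[OF d, of p]]
        unfolding pmul_def by blast
    qed
  qed
  have r1: "\<forall>a\<in>G. pmul a (pmul a a) = a"
  proof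
    fix a assume a: "a \<in> G"
    show "pmul a (pmul a a) = a"
    proof fix p show "pmul a (pmul a a) p = a p" using p_cube[OF V[OF a, of p]]  unfolding pmul_def by blast qed
  qed
  have r2: "\<forall>a\<in>G. \<forall>b\<in>G. \<forall>c\<in>G. c \<in> Dt G a (pmul a (pmul b b)) \<longrightarrow> c = a"
  proof (intro ballI impI)
    fix a b c assume a: "a \<in> G" and b: "b \<in> G" and c: "c \<in> G" and h: "c \<in> Dt G a (pmul a (pmul b b))"
    show "c = a"
    proof fix p
      have "a p * c p > 0 \<or> pmul a (pmul b b) p * c p > 0 \<or> (c p = 0 \<and> pmul a (pmul b b) p = - a p)" using h by (simp add: Dt_def)
      then show "c p = a p" using p_r2[OF V[OF a, of p] V[OF b, of p] V[OF c, of p]]  unfolding pmul_def by blast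
    qed
  qed
  have r3: "\<forall>a\<in>G. \<forall>b\<in>G. \<forall>c\<in>G. \<forall>d\<in>G.
        c \<in> Dt G (pmul a a) (pmul b b) \<and> d \<in> Dt G (pmul a a) (pmul b b) \<longrightarrow> c = d"
  proof (intro ballI impI)
    fix a b c d assume a: "a \<in> G" and b: "b \<in> G" and c: "c \<in> G" and d: "d \<in> G"
      and h: "c \<in> Dt G (pmul a a) (pmul b b) \<and> d \<in> Dt G (pmul a a) (pmul b b)"
    show "c = d"
    proof fix p
      have "pmul a a p * c p > 0 \<or> pmul b b p * c p > 0 \<or> (c p = 0 \<and> pmul b b p = - pmul a a p)"
        "pmul a a p * d p > 0 \<or> pmul b b p * d p > 0 \<or> (d p = 0 \<and> pmul b b p = - pmul a a p)"
        using h by (simp_all add: Dt_def)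
      then show "c p = d p" using p_r3[OF V[OF a, of p] V[OF b, of p] V[OF c, of p] V[OF d, of p]]  unfolding pmul_def by blast
    qed
  qed
  have one0: "cst 1 \<noteq> (cst 0 :: 'x \<Rightarrow> int)" by (metis cst_def zero_neq_one)
  have alg: "(\<forall>x\<in>G. \<forall>y\<in>G. \<forall>z\<in>G. pmul (pmul x y) z = pmul x (pmul y z)) \<and>
     (\<forall>x\<in>G. \<forall>y\<in>G. pmul x y = pmul y x) \<and>
     (\<forall>x\<in>G. pmul x (cst 1) = x) \<and>
     (\<forall>a\<in>G. pmul a (cst 0) = cst 0)"
    by (simp add: pmul_def cst_def ac_simps)
  have cl: "\<forall>x\<in>G. \<forall>y\<in>G. Dt G x y \<subseteq> G \<and> Dt G x y \<noteq> {}"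
    using nonempty[OF A] Dt_G by blast
  have as: "\<forall>x\<in>G. \<forall>y\<in>G. \<forall>w\<in>G. setadd (Dt G) (Dt G x y) w = (\<Union>v\<in>Dt G y w. Dt G x v)"
    using assoc1[OF A] by blast
  have cm: "\<forall>x\<in>G. \<forall>y\<in>G. Dt G x y = Dt G y x" using Dt_comm by blast
  have cs: "cst 0 \<in> G" "cst 1 \<in> G" using cst_G[OF A] by auto
  have ng: "\<forall>x\<in>G. pmul (cst (-1)) x \<in> G" using neg_G[OF A] by blast
  have pg: "\<forall>x\<in>G. \<forall>y\<in>G. pmul x y \<in> G" using pmul_G[OF A] by blast
  have mr: "multiring G (Dt G) pmul (\<lambda>a. pmul (cst (-1)) a) (cst 0) (cst 1)"
    unfolding multiring_def
    using cs ng pg cl m1 m2 as cm m3 alg by blast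
  show ?thesis unfolding real_reduced_multiring_def using mr one0 r1 r2 r3 by blast
qed

end
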